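(* Let $A,E\in\mathbb{R}^{n\times m}$, $\widetilde A=A+E$, $1\le r<\min\{n,m\}$, with full SVDs $A=U\Sigma V^T$ and $\widetilde A=\widetilde U\widetilde\Sigma\widetilde V^T$, and let $A_r=U_1\Sigma_1V_1^T$, $\widetilde A_r=\widetilde U_1\widetilde\Sigma_1\widetilde V_1^T$. Then \[A_r-\widetilde A_r=U\begin{pmatrix}-U_1^TE\widetilde V_1 & -U_1^TE\widetilde V_2\\ -U_2^TAV_2V_2^T\widetilde V_1 & 0\end{pmatrix}\widetilde V^T+U\begin{pmatrix}0 & U_1^T\widetilde U_2\widetilde U_2^T\widetilde A\widetilde V_2\\ -U_2^TE\widetilde V_1 & 0\end{pmatrix}\widetilde V^T.\]
   Context: In the full SVDs, $U,\widetilde U\in\mathbb{R}^{n\times n}$ and $V,\widetilde V\in\mathbb{R}^{m\times m}$ are orthogonal and the singular values are in nonincreasing order. $U=(U_1\ U_2)$, $\widetilde U=(\widetilde U_1\ \widetilde U_2)$ with $U_1,\widetilde U_1\in\mathbb{R}^{n\times r}$; $V=(V_1\ V_2)$, $\widetilde V=(\widetilde V_1\ \widetilde V_2)$ with $V_1,\widetilde V_1\in\mathbb{R}^{m\times r}$; $\Sigma_1,\widetilde\Sigma_1$ are the $r\times r$ diagonal matrices of the $r$ largest singular values of $A$ and $\widetilde A$. *)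

theory Defs
  imports "Jordan_Normal_Form.Matrix"
begin

definition orth_mat :: "nat \<Rightarrow> real mat \<Rightarrow> bool" where
  "orth_mat k Q \<longleftrightarrow> Q \<in> carrier_mat k k \<and> transpose_mat Q * Q = 1\<^sub>m k"

definition full_svd :: "nat \<Rightarrow> nat \<Rightarrow> real mat \<Rightarrow> real mat \<Rightarrow> real mat \<Rightarrow> real mat \<Rightarrow> bool" where
  "full_svd n m A U S V \<longleftrightarrow>
     A \<in> carrier_mat n m \<and> orth_mat n U \<and> orth_mat m V \<and> S \<in> carrier_mat n m \<and>
     (\<forall>i<n. \<forall>j<m. i \<noteq> j \<longrightarrow> S $$ (i,j) = 0) \<and>
     (\<forall>i<min n m. 0 \<le> S $$ (i,i)) \<and>
     (\<forall>i j. i \<le> j \<longrightarrow> j < min n m \<longrightarrow> S $$ (j,j) \<le> S $$ (i,i)) \<and>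
     A = U * S * transpose_mat V"

definition cols_first :: "nat \<Rightarrow> 'a mat \<Rightarrow> 'a mat" where
  "cols_first r Q = mat (dim_row Q) r (\<lambda>(i,j). Q $$ (i,j))"

definition cols_last :: "nat \<Rightarrow> 'a mat \<Rightarrow> 'a mat" where
  "cols_last r Q = mat (dim_row Q) (dim_col Q - r) (\<lambda>(i,j). Q $$ (i, j + r))"

definition lead_block :: "nat \<Rightarrow> 'a mat \<Rightarrow> 'a mat" where
  "lead_block r S = mat r r (\<lambda>(i,j). S $$ (i,j))"

end

theory Submission
  imports Defs "Jordan_Normal_Form.Determinant"
begin

lemma assoc': "dim_col A = dim_row B \<Longrightarrow> dim_col B = dim_row C \<Longrightarrow> A * B * C = A * (B * (C::'a::semiring_0 mat))"
  by (rule assoc_mult_mat[of A "dim_row A" "dim_col A" B "dim_col B" C "dim_col C"]) auto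

lemma cf_dims[simp]: "dim_row (cols_first r X) = dim_row X" "dim_col (cols_first r X) = r"
  "dim_row (cols_last r X) = dim_row X" "dim_col (cols_last r X) = dim_col X - r"
  "dim_row (lead_block r X) = r" "dim_col (lead_block r X) = r"
  by (auto simp: cols_first_def cols_last_def lead_block_def)

lemma fb_left: "X \<in> carrier_mat a (p+p') \<Longrightarrow>
  X = four_block_mat (cols_first p X) (cols_last p X) (0\<^sub>m 0 p) (0\<^sub>m 0 p')"
  by (rule eq_matI) (auto simp: cols_first_def cols_last_def)

lemma fb_right: "Y \<in> carrier_mat b (q+q') \<Longrightarrow>
  transpose_mat Y = four_block_mat (transpose_mat (cols_first q Y)) (0\<^sub>m q 0) (transpose_mat (cols_last q Y)) (0\<^sub>m q' 0)"
  by (rule eq_matI) (auto simp: cols_first_def cols_last_def)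

lemma fb_triv: "W \<in> carrier_mat a b \<Longrightarrow> B \<in> carrier_mat a 0 \<Longrightarrow> C \<in> carrier_mat 0 b \<Longrightarrow> D \<in> carrier_mat 0 0 \<Longrightarrow>
  four_block_mat W B C D = W"
  by (rule eq_matI) auto

lemma block_expand:
  fixes X Y C11 C12 C21 C22 :: "'a::comm_ring_1 mat"
  assumes X: "X \<in> carrier_mat a (p+p')" and Y: "Y \<in> carrier_mat b (q+q')"
  and C: "C11 \<in> carrier_mat p q" "C12 \<in> carrier_mat p q'" "C21 \<in> carrier_mat p' q" "C22 \<in> carrier_mat p' q'"
  shows "X * four_block_mat C11 C12 C21 C22 * transpose_mat Y =
     cols_first p X * C11 * transpose_mat (cols_first q Y) + cols_first p X * C12 * transpose_mat (cols_last q Y)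
   + cols_last p X * C21 * transpose_mat (cols_first q Y) + cols_last p X * C22 * transpose_mat (cols_last q Y)"
proof -
  let ?X1 = "cols_first p X" and ?X2 = "cols_last p X" and ?Y1 = "transpose_mat (cols_first q Y)"
    and ?Y2 = "transpose_mat (cols_last q Y)"
  have c: "?X1 \<in> carrier_mat a p" "?X2 \<in> carrier_mat a p'" "?Y1 \<in> carrier_mat q b" "?Y2 \<in> carrier_mat q' b"
    using X Y by auto
  have "X * four_block_mat C11 C12 C21 C22 = four_block_mat (?X1 * C11 + ?X2 * C21) (?X1 * C12 + ?X2 * C22)
      (0\<^sub>m 0 p * C11 + 0\<^sub>m 0 p' * C21) (0\<^sub>m 0 p * C12 + 0\<^sub>m 0 p' * C22)"
    by (subst fb_left[OF X], rule mult_four_block_mat) (use c C in auto)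
  also have "\<dots> * transpose_mat Y = four_block_mat ((?X1 * C11 + ?X2 * C21) * ?Y1 + (?X1 * C12 + ?X2 * C22) * ?Y2)
     ((?X1 * C11 + ?X2 * C21) * 0\<^sub>m q 0 + (?X1 * C12 + ?X2 * C22) * 0\<^sub>m q' 0)
     ((0\<^sub>m 0 p * C11 + 0\<^sub>m 0 p' * C21) * ?Y1 + (0\<^sub>m 0 p * C12 + 0\<^sub>m 0 p' * C22) * ?Y2)
     ((0\<^sub>m 0 p * C11 + 0\<^sub>m 0 p' * C21) * 0\<^sub>m q 0 + (0\<^sub>m 0 p * C12 + 0\<^sub>m 0 p' * C22) * 0\<^sub>m q' 0)"
    by (subst fb_right[OF Y], rule mult_four_block_mat) (use c C in auto)
  also have "\<dots> = (?X1 * C11 + ?X2 * C21) * ?Y1 + (?X1 * C12 + ?X2 * C22) * ?Y2"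
    by (rule fb_triv) (use c C in auto)
  also have "\<dots> = ?X1 * C11 * ?Y1 + ?X1 * C12 * ?Y2 + ?X2 * C21 * ?Y1 + ?X2 * C22 * ?Y2"
  proof -
    have "(?X1 * C11 + ?X2 * C21) * ?Y1 = ?X1 * C11 * ?Y1 + ?X2 * C21 * ?Y1"
      by (rule add_mult_distrib_mat) (use c C in auto)
    moreover have "(?X1 * C12 + ?X2 * C22) * ?Y2 = ?X1 * C12 * ?Y2 + ?X2 * C22 * ?Y2"
      by (rule add_mult_distrib_mat) (use c C in auto)
    ultimately show ?thesis
      by (intro eq_matI) (use c C in auto)
  qed
  finally show ?thesis .
qed

lemma idx_mult: "dim_col X = dim_row Y \<Longrightarrow> i < dim_row X \<Longrightarrow> j < dim_col Y \<Longrightarrow>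
  (X * Y) $$ (i,j) = (\<Sum>k\<in>{0..<dim_col X}. X $$ (i,k) * Y $$ (k,j))"
  by (auto simp: scalar_prod_def intro!: sum.cong)

lemma sum_split: "(r::nat) \<le> N \<Longrightarrow> (\<Sum>k\<in>{0..<N}. f k) = (\<Sum>k\<in>{0..<r}. f k) + (\<Sum>k\<in>{0..<N-r}. f (k + r))"
proof -
  assume "r \<le> N"
  then have "(\<Sum>k\<in>{0..<N}. f k) = (\<Sum>k\<in>{0..<r}. f k) + (\<Sum>k\<in>{r..<N}. f k)"
    using sum.atLeastLessThan_concat[of 0 r N f] by simp
  also have "(\<Sum>k\<in>{r..<N}. f k) = (\<Sum>k\<in>{0..<N-r}. f (k + r))"
    using \<open>r \<le> N\<close> by (metis add_0 le_add_diff_inverse2 sum.shift_bounds_nat_ivl)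
  finally show ?thesis .
qed

lemma sum_single: "(\<And>k. k < (N::nat) \<Longrightarrow> k \<noteq> j \<Longrightarrow> g k = 0) \<Longrightarrow>
  (\<Sum>k\<in>{0..<N}. g k) = (if j < N then g j else (0::'a::comm_monoid_add))"
proof -
  assume h: "\<And>k. k < N \<Longrightarrow> k \<noteq> j \<Longrightarrow> g k = 0"
  show ?thesis
  proof (cases "j < N")
    case True
    then have "(\<Sum>k\<in>{0..<N}. g k) = g j + (\<Sum>k\<in>{0..<N} - {j}. g k)"
      by (subst sum.remove[of _ j]) auto
    also have "(\<Sum>k\<in>{0..<N} - {j}. g k) = 0" using h by (intro sum.neutral) auto
    finally show ?thesis using True by simp
  next
    case False
    then show ?thesis using h by (auto intro!: sum.neutral)
  qed
qed

lemma orth_rr: fixes Q :: "real mat" assumes Q: "Q \<in> carrier_mat N N" "transpose_mat Q * Q = 1\<^sub>m N" and r: "r \<le> N"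
  shows "Q * transpose_mat Q = 1\<^sub>m N"
  using mat_mult_left_right_inverse[of "transpose_mat Q" N Q] Q by auto

lemma orth_O2: fixes Q :: "real mat" assumes Q: "Q \<in> carrier_mat N N" "transpose_mat Q * Q = 1\<^sub>m N" and r: "r \<le> N"
  shows "transpose_mat (cols_last r Q) * cols_last r Q = 1\<^sub>m (N - r)"
proof (rule eq_matI)
  fix i j assume ij: "i < dim_row (1\<^sub>m (N - r))" "j < dim_col (1\<^sub>m (N - r))"
  have "(transpose_mat (cols_last r Q) * cols_last r Q) $$ (i,j) = (transpose_mat Q * Q) $$ (i+r, j+r)"
    using ij Q r by (subst idx_mult, simp, simp, simp, subst idx_mult, auto simp: cols_last_def)
  also have "\<dots> = 1\<^sub>m (N - r) $$ (i,j)" using Q(2) ij by simp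
  finally show "(transpose_mat (cols_last r Q) * cols_last r Q) $$ (i,j) = 1\<^sub>m (N - r) $$ (i,j)" .
qed (use Q r in auto)

lemma orth_O3: fixes Q :: "real mat" assumes Q: "Q \<in> carrier_mat N N" "transpose_mat Q * Q = 1\<^sub>m N" and r: "r \<le> N"
  shows "cols_first r Q * transpose_mat (cols_first r Q) + cols_last r Q * transpose_mat (cols_last r Q) = 1\<^sub>m N"
proof (rule eq_matI)
  fix i j assume ij: "i < dim_row (1\<^sub>m N)" "j < dim_col (1\<^sub>m N)"
  have "(cols_first r Q * transpose_mat (cols_first r Q) + cols_last r Q * transpose_mat (cols_last r Q)) $$ (i,j)
     = (\<Sum>k\<in>{0..<r}. Q $$ (i,k) * Q $$ (j,k)) + (\<Sum>k\<in>{0..<N-r}. Q $$ (i,k+r) * Q $$ (j,k+r))"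
    using ij Q r by (simp add: scalar_prod_def cols_last_def cols_first_def)
  also have "\<dots> = (Q * transpose_mat Q) $$ (i,j)"
    using ij Q r by (simp add: scalar_prod_def sum_split[of r N "\<lambda>k. Q $$ (i,k) * Q $$ (j,k)"])
  also have "\<dots> = 1\<^sub>m N $$ (i,j)" using orth_rr[OF Q r] by simp
  finally show "(cols_first r Q * transpose_mat (cols_first r Q) + cols_last r Q * transpose_mat (cols_last r Q)) $$ (i,j) = 1\<^sub>m N $$ (i,j)" .
qed (use Q r in auto)

definition blk22 :: "nat \<Rightarrow> real mat \<Rightarrow> real mat" where
  "blk22 r S = mat (dim_row S - r) (dim_col S - r) (\<lambda>(i,j). S $$ (i + r, j + r))"

lemma svd_basic:
  assumes "full_svd n m A U S V"
  shows "transpose_mat U * A = S * transpose_mat V" "A * V = U * S"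
proof -
  have c: "U \<in> carrier_mat n n" "V \<in> carrier_mat m m" "S \<in> carrier_mat n m"
    and o: "transpose_mat U * U = 1\<^sub>m n" "transpose_mat V * V = 1\<^sub>m m"
    and A: "A = U * S * transpose_mat V"
    using assms unfolding full_svd_def orth_mat_def by auto
  have d: "dim_row U = n" "dim_col U = n" "dim_row V = m" "dim_col V = m" "dim_row S = n" "dim_col S = m"
    using c by auto
  have "transpose_mat U * A = transpose_mat U * U * S * transpose_mat V"
    unfolding A using d by (simp add: assoc')
  also have "\<dots> = S * transpose_mat V" using o d by simp
  finally show "transpose_mat U * A = S * transpose_mat V" .
  have "A * V = U * S * (transpose_mat V * V)"
    unfolding A using d by (simp add: assoc')
  also have "\<dots> = U * S" using o d by simp
  finally show "A * V = U * S" .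
qed

lemma svd_blocks:
  assumes svd: "full_svd n m A U S V" and r: "r < min n m"
  shows "transpose_mat (cols_first r U) * A = lead_block r S * transpose_mat (cols_first r V)"
    "transpose_mat (cols_last r U) * A = blk22 r S * transpose_mat (cols_last r V)"
    "A * cols_first r V = cols_first r U * lead_block r S"
    "A * cols_last r V = cols_last r U * blk22 r S"
proof -
  have c: "U \<in> carrier_mat n n" "V \<in> carrier_mat m m" "S \<in> carrier_mat n m" "A \<in> carrier_mat n m"
    and diag: "\<And>i j. i < n \<Longrightarrow> j < m \<Longrightarrow> i \<noteq> j \<Longrightarrow> S $$ (i,j) = 0"
    using svd unfolding full_svd_def orth_mat_def by auto
  note b = svd_basic[OF svd]
  show "transpose_mat (cols_first r U) * A = lead_block r S * transpose_mat (cols_first r V)"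
  proof (rule eq_matI)
    fix i j assume ij: "i < dim_row (lead_block r S * transpose_mat (cols_first r V))"
       "j < dim_col (lead_block r S * transpose_mat (cols_first r V))"
    then have ij': "i < r" "j < m" using c by auto
    have "(transpose_mat (cols_first r U) * A) $$ (i,j) = (transpose_mat U * A) $$ (i,j)"
      using ij' c r by (simp add: scalar_prod_def cols_first_def)
    also have "\<dots> = (S * transpose_mat V) $$ (i,j)" using b by simp
    also have "\<dots> = (\<Sum>k\<in>{0..<m}. S $$ (i,k) * V $$ (j,k))"
      using ij' c r by (simp add: scalar_prod_def)
    also have "\<dots> = S $$ (i,i) * V $$ (j,i)"
      using ij' r diag by (subst sum_single[where j=i]) auto
    also have "\<dots> = (\<Sum>k\<in>{0..<r}. S $$ (i,k) * V $$ (j,k))"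
      using ij' r diag by (subst sum_single[where j=i]) auto
    also have "\<dots> = (lead_block r S * transpose_mat (cols_first r V)) $$ (i,j)"
      using ij' c r by (simp add: scalar_prod_def cols_first_def lead_block_def)
    finally show "(transpose_mat (cols_first r U) * A) $$ (i,j) = (lead_block r S * transpose_mat (cols_first r V)) $$ (i,j)" .
  qed (use c in auto)
  show "transpose_mat (cols_last r U) * A = blk22 r S * transpose_mat (cols_last r V)"
  proof (rule eq_matI)
    fix i j assume ij: "i < dim_row (blk22 r S * transpose_mat (cols_last r V))"
       "j < dim_col (blk22 r S * transpose_mat (cols_last r V))"
    then have ij': "i < n - r" "j < m" using c by (auto simp: blk22_def)
    have "(transpose_mat (cols_last r U) * A) $$ (i,j) = (transpose_mat U * A) $$ (i + r,j)"
      using ij' c r by (simp add: scalar_prod_def cols_last_def)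
    also have "\<dots> = (S * transpose_mat V) $$ (i + r,j)" using b by simp
    also have "\<dots> = (\<Sum>k\<in>{0..<m}. S $$ (i + r,k) * V $$ (j,k))"
      using ij' c r by (simp add: scalar_prod_def)
    also have "\<dots> = (if i + r < m then S $$ (i + r,i + r) * V $$ (j,i + r) else 0)"
      using ij' r diag by (subst sum_single[where j="i+r"]) auto
    also have "\<dots> = (\<Sum>k\<in>{0..<m - r}. S $$ (i + r,k + r) * V $$ (j,k + r))"
      using ij' r diag by (subst sum_single[where j=i]) auto
    also have "\<dots> = (blk22 r S * transpose_mat (cols_last r V)) $$ (i,j)"
      using ij' c r by (simp add: scalar_prod_def cols_last_def blk22_def)
    finally show "(transpose_mat (cols_last r U) * A) $$ (i,j) = (blk22 r S * transpose_mat (cols_last r V)) $$ (i,j)" .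
  qed (use c in \<open>auto simp: blk22_def\<close>)
  show "A * cols_first r V = cols_first r U * lead_block r S"
  proof (rule eq_matI)
    fix i j assume ij: "i < dim_row (cols_first r U * lead_block r S)"
       "j < dim_col (cols_first r U * lead_block r S)"
    then have ij': "i < n" "j < r" using c by auto
    have "(A * cols_first r V) $$ (i,j) = (A * V) $$ (i,j)"
      using ij' c r by (simp add: scalar_prod_def cols_first_def)
    also have "\<dots> = (U * S) $$ (i,j)" using b by simp
    also have "\<dots> = (\<Sum>k\<in>{0..<n}. U $$ (i,k) * S $$ (k,j))"
      using ij' c r by (simp add: scalar_prod_def)
    also have "\<dots> = U $$ (i,j) * S $$ (j,j)"
      using ij' r diag by (subst sum_single[where j=j]) auto
    also have "\<dots> = (\<Sum>k\<in>{0..<r}. U $$ (i,k) * S $$ (k,j))"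
      using ij' r diag by (subst sum_single[where j=j]) auto
    also have "\<dots> = (cols_first r U * lead_block r S) $$ (i,j)"
      using ij' c r by (simp add: scalar_prod_def cols_first_def lead_block_def)
    finally show "(A * cols_first r V) $$ (i,j) = (cols_first r U * lead_block r S) $$ (i,j)" .
  qed (use c in auto)
  show "A * cols_last r V = cols_last r U * blk22 r S"
  proof (rule eq_matI)
    fix i j assume ij: "i < dim_row (cols_last r U * blk22 r S)"
       "j < dim_col (cols_last r U * blk22 r S)"
    then have ij': "i < n" "j < m - r" using c by (auto simp: blk22_def)
    have "(A * cols_last r V) $$ (i,j) = (A * V) $$ (i,j + r)"
      using ij' c r by (simp add: scalar_prod_def cols_last_def)
    also have "\<dots> = (U * S) $$ (i,j + r)" using b by simp
    also have "\<dots> = (\<Sum>k\<in>{0..<n}. U $$ (i,k) * S $$ (k,j + r))"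
      using ij' c r by (simp add: scalar_prod_def)
    also have "\<dots> = (if j + r < n then U $$ (i,j + r) * S $$ (j + r,j + r) else 0)"
      using ij' r diag by (subst sum_single[where j="j+r"]) auto
    also have "\<dots> = (\<Sum>k\<in>{0..<n - r}. U $$ (i,k + r) * S $$ (k + r,j + r))"
      using ij' r diag by (subst sum_single[where j=j]) auto
    also have "\<dots> = (cols_last r U * blk22 r S) $$ (i,j)"
      using ij' c r by (simp add: scalar_prod_def cols_last_def blk22_def)
    finally show "(A * cols_last r V) $$ (i,j) = (cols_last r U * blk22 r S) $$ (i,j)" .
  qed (use c in \<open>auto simp: blk22_def\<close>)
qed

theorem lemma3p18:
  fixes n m r :: nat and A E U S V Ut St Vt :: "real mat"
  assumes "A \<in> carrier_mat n m" and "E \<in> carrier_mat n m"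
    and "1 \<le> r" and "r < min n m"
    and "full_svd n m A U S V"
    and "full_svd n m (A + E) Ut St Vt"
  shows
    "let At = A + E;
         U1 = cols_first r U; U2 = cols_last r U; V1 = cols_first r V; V2 = cols_last r V;
         Ut1 = cols_first r Ut; Ut2 = cols_last r Ut; Vt1 = cols_first r Vt; Vt2 = cols_last r Vt;
         Ar = U1 * lead_block r S * transpose_mat V1;
         Atr = Ut1 * lead_block r St * transpose_mat Vt1
     in Ar - Atr =
        U * four_block_mat
              (- (transpose_mat U1 * E * Vt1)) (- (transpose_mat U1 * E * Vt2))
              (- (transpose_mat U2 * A * V2 * transpose_mat V2 * Vt1)) (0\<^sub>m (n - r) (m - r))
          * transpose_mat Vt
      + U * four_block_mat
              (0\<^sub>m r r) (transpose_mat U1 * Ut2 * transpose_mat Ut2 * At * Vt2)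
              (- (transpose_mat U2 * E * Vt1)) (0\<^sub>m (n - r) (m - r))
          * transpose_mat Vt"
proof -
  note svdA = assms(5) and svdAt = assms(6)
  have r: "r < n" "r < m" "r \<le> n" "r \<le> m" using assms(4) by auto
  have cA: "A \<in> carrier_mat n m" "E \<in> carrier_mat n m" using assms by auto
  have c: "U \<in> carrier_mat n n" "V \<in> carrier_mat m m" "S \<in> carrier_mat n m"
     "Ut \<in> carrier_mat n n" "Vt \<in> carrier_mat m m" "St \<in> carrier_mat n m"
    and oU: "transpose_mat U * U = 1\<^sub>m n" and oV: "transpose_mat V * V = 1\<^sub>m m"
    and oUt: "transpose_mat Ut * Ut = 1\<^sub>m n" and oVt: "transpose_mat Vt * Vt = 1\<^sub>m m"
    using svdA svdAt unfolding full_svd_def orth_mat_def by auto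
  define At where "At = A + E"
  define U1 where "U1 = cols_first r U"
  define U2 where "U2 = cols_last r U"
  define V1 where "V1 = cols_first r V"
  define V2 where "V2 = cols_last r V"
  define Ut1 where "Ut1 = cols_first r Ut"
  define Ut2 where "Ut2 = cols_last r Ut"
  define Vt1 where "Vt1 = cols_first r Vt"
  define Vt2 where "Vt2 = cols_last r Vt"
  define P where "P = U1 * transpose_mat U1"
  define P2 where "P2 = U2 * transpose_mat U2"
  define Q where "Q = Vt1 * transpose_mat Vt1"
  define Q2 where "Q2 = Vt2 * transpose_mat Vt2"
  have cAt: "At \<in> carrier_mat n m" using cA by (simp add: At_def)
  have d: "dim_row U1 = n" "dim_col U1 = r" "dim_row U2 = n" "dim_col U2 = n - r"
    "dim_row V1 = m" "dim_col V1 = r" "dim_row V2 = m" "dim_col V2 = m - r"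
    "dim_row Ut1 = n" "dim_col Ut1 = r" "dim_row Ut2 = n" "dim_col Ut2 = n - r"
    "dim_row Vt1 = m" "dim_col Vt1 = r" "dim_row Vt2 = m" "dim_col Vt2 = m - r"
    "dim_row A = n" "dim_col A = m" "dim_row E = n" "dim_col E = m" "dim_row At = n" "dim_col At = m"
    "dim_row U = n" "dim_col U = n" "dim_row Vt = m" "dim_col Vt = m"
    using c cA cAt by (auto simp: U1_def U2_def V1_def V2_def Ut1_def Ut2_def Vt1_def Vt2_def)
  have dP: "P \<in> carrier_mat n n" "P2 \<in> carrier_mat n n" "Q \<in> carrier_mat m m" "Q2 \<in> carrier_mat m m"
    using d by (auto simp: P_def P2_def Q_def Q2_def)
  have fa: "transpose_mat U1 * A = lead_block r S * transpose_mat V1"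
    using svd_blocks(1)[OF svdA assms(4)] by (simp add: U1_def V1_def)
  have fb: "transpose_mat U2 * A = blk22 r S * transpose_mat V2"
    using svd_blocks(2)[OF svdA assms(4)] by (simp add: U2_def V2_def)
  have fc: "At * Vt1 = Ut1 * lead_block r St"
    using svd_blocks(3)[OF svdAt assms(4)] by (simp add: At_def Ut1_def Vt1_def)
  have fd: "At * Vt2 = Ut2 * blk22 r St"
    using svd_blocks(4)[OF svdAt assms(4)] by (simp add: At_def Ut2_def Vt2_def)
  have oV2: "transpose_mat V2 * V2 = 1\<^sub>m (m - r)"
    using orth_O2[OF c(2) oV r(4)] by (simp add: V2_def)
  have oUt2: "transpose_mat Ut2 * Ut2 = 1\<^sub>m (n - r)"
    using orth_O2[OF c(4) oUt r(3)] by (simp add: Ut2_def)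
  have PP: "P + P2 = 1\<^sub>m n"
    using orth_O3[OF c(1) oU r(3)] by (simp add: P_def P2_def U1_def U2_def)
  have QQ: "Q + Q2 = 1\<^sub>m m"
    using orth_O3[OF c(5) oVt r(4)] by (simp add: Q_def Q2_def Vt1_def Vt2_def)
  have db: "dim_row (blk22 r S) = n - r" "dim_col (blk22 r S) = m - r"
     "dim_row (blk22 r St) = n - r" "dim_col (blk22 r St) = m - r"
    using c by (auto simp: blk22_def)
  have LA: "U1 * lead_block r S * transpose_mat V1 = P * A"
  proof -
    have "U1 * lead_block r S * transpose_mat V1 = U1 * (transpose_mat U1 * A)"
      using d by (simp add: fa assoc')
    also have "\<dots> = P * A" unfolding P_def using d by (simp add: assoc')
    finally show ?thesis .
  qed
  have LAt: "Ut1 * lead_block r St * transpose_mat Vt1 = At * Q"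
    unfolding fc[symmetric] Q_def using d by (simp add: assoc')
  have F3: "transpose_mat U2 * A * V2 * transpose_mat V2 = transpose_mat U2 * A"
  proof -
    have "transpose_mat U2 * A * V2 * transpose_mat V2 = blk22 r S * (transpose_mat V2 * V2) * transpose_mat V2"
      unfolding fb using d db by (simp add: assoc')
    also have "\<dots> = transpose_mat U2 * A" unfolding fb oV2 using d db by simp
    finally show ?thesis .
  qed
  have F4: "transpose_mat U1 * Ut2 * transpose_mat Ut2 * At * Vt2 = transpose_mat U1 * (At * Vt2)"
  proof -
    have "transpose_mat U1 * Ut2 * transpose_mat Ut2 * At * Vt2 = transpose_mat U1 * (Ut2 * ((transpose_mat Ut2 * Ut2) * blk22 r St))"
      using d db by (simp add: assoc' fd)
    also have "\<dots> = transpose_mat U1 * (At * Vt2)" unfolding oUt2 fd using d db by simp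
    finally show ?thesis .
  qed
  have RB: "U * four_block_mat
              (- (transpose_mat U1 * E * Vt1)) (- (transpose_mat U1 * E * Vt2))
              (- (transpose_mat U2 * A * V2 * transpose_mat V2 * Vt1)) (0\<^sub>m (n - r) (m - r))
          * transpose_mat Vt
      + U * four_block_mat
              (0\<^sub>m r r) (transpose_mat U1 * Ut2 * transpose_mat Ut2 * At * Vt2)
              (- (transpose_mat U2 * E * Vt1)) (0\<^sub>m (n - r) (m - r))
          * transpose_mat Vt
     = U1 * (- (transpose_mat U1 * E * Vt1)) * transpose_mat Vt1 + U1 * (- (transpose_mat U1 * E * Vt2)) * transpose_mat Vt2
       + U2 * (- (transpose_mat U2 * A * V2 * transpose_mat V2 * Vt1)) * transpose_mat Vt1 + U2 * 0\<^sub>m (n - r) (m - r) * transpose_mat Vt2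
     + (U1 * 0\<^sub>m r r * transpose_mat Vt1 + U1 * (transpose_mat U1 * Ut2 * transpose_mat Ut2 * At * Vt2) * transpose_mat Vt2
       + U2 * (- (transpose_mat U2 * E * Vt1)) * transpose_mat Vt1 + U2 * 0\<^sub>m (n - r) (m - r) * transpose_mat Vt2)"
    unfolding U1_def U2_def Vt1_def Vt2_def
    by (subst (1 2) block_expand[where a=n and p=r and p'="n-r" and b=m and q=r and q'="m-r"])
       (use c r cA cAt in auto)
  have a1: "U1 * (- (transpose_mat U1 * E * Vt1)) * transpose_mat Vt1 = - (P * E * Q)"
    unfolding P_def Q_def using d by (simp add: assoc')
  have a2: "U1 * (- (transpose_mat U1 * E * Vt2)) * transpose_mat Vt2 = - (P * E * Q2)"
    unfolding P_def Q2_def using d by (simp add: assoc')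
  have a3: "U2 * (- (transpose_mat U2 * A * V2 * transpose_mat V2 * Vt1)) * transpose_mat Vt1 = - (P2 * (A * Q))"
    unfolding F3 P2_def Q_def using d by (simp add: assoc')
  have b2: "U1 * (transpose_mat U1 * Ut2 * transpose_mat Ut2 * At * Vt2) * transpose_mat Vt2 = P * At * Q2"
    unfolding F4 P_def Q2_def using d by (simp add: assoc')
  have b3: "U2 * (- (transpose_mat U2 * E * Vt1)) * transpose_mat Vt1 = - (P2 * (E * Q))"
    unfolding P2_def Q_def using d by (simp add: assoc')
  have z: "U2 * 0\<^sub>m (n - r) (m - r) * transpose_mat Vt2 = 0\<^sub>m n m" "U1 * 0\<^sub>m r r * transpose_mat Vt1 = 0\<^sub>m n m"
    using d by simp_all
  have R1: "P * E * Q + P * E * Q2 = P * E"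
  proof -
    have "P * E * Q + P * E * Q2 = P * E * (Q + Q2)"
      by (rule mult_add_distrib_mat[symmetric]) (use dP cA in auto)
    then show ?thesis using QQ dP cA by simp
  qed
  have R2: "P * At * Q + P * At * Q2 = P * At"
  proof -
    have "P * At * Q + P * At * Q2 = P * At * (Q + Q2)"
      by (rule mult_add_distrib_mat[symmetric]) (use dP cAt in auto)
    then show ?thesis using QQ dP cAt by simp
  qed
  have R3: "P * (A * Q) + P2 * (A * Q) = A * Q"
  proof -
    have "P * (A * Q) + P2 * (A * Q) = (P + P2) * (A * Q)"
      by (rule add_mult_distrib_mat[symmetric]) (use dP cA in auto)
    then show ?thesis using PP dP cA by simp
  qed
  have R4: "P * (E * Q) + P2 * (E * Q) = E * Q"
  proof -
    have "P * (E * Q) + P2 * (E * Q) = (P + P2) * (E * Q)"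
      by (rule add_mult_distrib_mat[symmetric]) (use dP cA in auto)
    then show ?thesis using PP dP cA by simp
  qed
  have R5: "P * At = P * A + P * E"
    unfolding At_def by (rule mult_add_distrib_mat) (use dP cA in auto)
  have R6: "P * At * Q = P * A * Q + P * E * Q"
    unfolding R5 by (rule add_mult_distrib_mat) (use dP cA in auto)
  have R7: "At * Q = A * Q + E * Q"
    unfolding At_def by (rule add_mult_distrib_mat) (use dP cA in auto)
  have as: "P * A * Q = P * (A * Q)" "P * E * Q = P * (E * Q)"
    using dP cA by auto
  have main: "P * A - At * Q = - (P * E * Q) + - (P * E * Q2) + - (P2 * (A * Q)) + 0\<^sub>m n m
     + (0\<^sub>m n m + P * At * Q2 + - (P2 * (E * Q)) + 0\<^sub>m n m)"
  proof (rule eq_matI)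
    fix i j assume ij: "i < dim_row (- (P * E * Q) + - (P * E * Q2) + - (P2 * (A * Q)) + 0\<^sub>m n m
     + (0\<^sub>m n m + P * At * Q2 + - (P2 * (E * Q)) + 0\<^sub>m n m))"
      "j < dim_col (- (P * E * Q) + - (P * E * Q2) + - (P2 * (A * Q)) + 0\<^sub>m n m
     + (0\<^sub>m n m + P * At * Q2 + - (P2 * (E * Q)) + 0\<^sub>m n m))"
    then have ij': "i < n" "j < m" by auto
    have e: "\<And>X Y Z. X + Y = Z \<Longrightarrow> X \<in> carrier_mat n m \<Longrightarrow> Y \<in> carrier_mat n m \<Longrightarrow> X $$ (i,j) + Y $$ (i,j) = Z $$ (i,j)"
      using ij' by auto
    note ee = e[OF R1] e[OF R2] e[OF R3] e[OF R4] e[OF R5[symmetric]] e[OF R6[symmetric]] e[OF R7[symmetric]]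
    have ee': "(P * E * Q) $$ (i,j) + (P * E * Q2) $$ (i,j) = (P * E) $$ (i,j)"
      "(P * At * Q) $$ (i,j) + (P * At * Q2) $$ (i,j) = (P * At) $$ (i,j)"
      "(P * (A * Q)) $$ (i,j) + (P2 * (A * Q)) $$ (i,j) = (A * Q) $$ (i,j)"
      "(P * (E * Q)) $$ (i,j) + (P2 * (E * Q)) $$ (i,j) = (E * Q) $$ (i,j)"
      "(P * A) $$ (i,j) + (P * E) $$ (i,j) = (P * At) $$ (i,j)"
      "(P * A * Q) $$ (i,j) + (P * E * Q) $$ (i,j) = (P * At * Q) $$ (i,j)"
      "(A * Q) $$ (i,j) + (E * Q) $$ (i,j) = (At * Q) $$ (i,j)"
      using ee dP cA cAt by auto
    show "(P * A - At * Q) $$ (i,j) = (- (P * E * Q) + - (P * E * Q2) + - (P2 * (A * Q)) + 0\<^sub>m n m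
     + (0\<^sub>m n m + P * At * Q2 + - (P2 * (E * Q)) + 0\<^sub>m n m)) $$ (i,j)"
      using ij' dP cA cAt ee' as by simp
  qed (use dP cA cAt in auto)
  show ?thesis
    unfolding Let_def At_def[symmetric] U1_def[symmetric] U2_def[symmetric] V1_def[symmetric] V2_def[symmetric]
      Ut1_def[symmetric] Ut2_def[symmetric] Vt1_def[symmetric] Vt2_def[symmetric]
    unfolding RB a1 a2 a3 b2 b3 z LA LAt by (rule main)
qed

end
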